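(* Let $G$ be a graph with $n\ge 2$ vertices that is both connected and co-connected. Then every connecting hypergraph $H$ of $G$ satisfies $\mathrm{cost}(H)\ge \frac{2(n-1)}{3}$.
   Context: All graphs are finite, simple and undirected. $G[X]$ denotes the subgraph induced by $X\subseteq V(G)$. The complement $\bar G$ has vertex set $V(G)$ and an edge $xy$ ($x\neq y$) iff $xy\notin E(G)$; $G$ is co-connected if $\bar G$ is connected. A connecting hypergraph of $G$ is a set $H$ of subsets of $V(G)$ such that every $E\in H$ satisfies $|E|\ge 2$ and $G[E]$ is connected, and for every pair of distinct non-adjacent vertices $u,v$ of $G$ there exists $E\in H$ with $u,v\in E$. Its cost is $\mathrm{cost}(H)=\sum_{E\in H}(|E|-2)$. *)

theory Defs
  imports Main
begin

definition simple_graph :: "'a set \<Rightarrow> ('a \<Rightarrow> 'a \<Rightarrow> bool) \<Rightarrow> bool" where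
  "simple_graph V E \<longleftrightarrow> finite V \<and> (\<forall>x y. E x y \<longrightarrow> x \<in> V \<and> y \<in> V)
     \<and> (\<forall>x y. E x y \<longrightarrow> E y x) \<and> (\<forall>x. \<not> E x x)"

definition induced_connected :: "('a \<Rightarrow> 'a \<Rightarrow> bool) \<Rightarrow> 'a set \<Rightarrow> bool" where
  "induced_connected E X \<longleftrightarrow> X \<noteq> {} \<and>
     (\<forall>u\<in>X. \<forall>v\<in>X. (\<lambda>x y. x \<in> X \<and> y \<in> X \<and> E x y)\<^sup>*\<^sup>* u v)"

definition connected_graph :: "'a set \<Rightarrow> ('a \<Rightarrow> 'a \<Rightarrow> bool) \<Rightarrow> bool" where
  "connected_graph V E \<longleftrightarrow> induced_connected E V"

definition compl_adj :: "'a set \<Rightarrow> ('a \<Rightarrow> 'a \<Rightarrow> bool) \<Rightarrow> 'a \<Rightarrow> 'a \<Rightarrow> bool" where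
  "compl_adj V E x y \<longleftrightarrow> x \<in> V \<and> y \<in> V \<and> x \<noteq> y \<and> \<not> E x y"

definition co_connected :: "'a set \<Rightarrow> ('a \<Rightarrow> 'a \<Rightarrow> bool) \<Rightarrow> bool" where
  "co_connected V E \<longleftrightarrow> connected_graph V (compl_adj V E)"

definition connecting_hypergraph :: "'a set \<Rightarrow> ('a \<Rightarrow> 'a \<Rightarrow> bool) \<Rightarrow> 'a set set \<Rightarrow> bool" where
  "connecting_hypergraph V E H \<longleftrightarrow>
     (\<forall>X\<in>H. X \<subseteq> V \<and> card X \<ge> 2 \<and> induced_connected E X) \<and>
     (\<forall>u\<in>V. \<forall>v\<in>V. u \<noteq> v \<and> \<not> E u v \<longrightarrow> (\<exists>X\<in>H. u \<in> X \<and> v \<in> X))"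

definition hcost :: "'a set set \<Rightarrow> int" where
  "hcost H = (\<Sum>X\<in>H. int (card X) - 2)"

end

theory Submission
  imports Defs
begin

definition hconn :: "'a set set \<Rightarrow> 'a \<Rightarrow> 'a \<Rightarrow> bool" where
  "hconn F = (\<lambda>x y. \<exists>X\<in>F. x \<in> X \<and> y \<in> X)\<^sup>*\<^sup>*"

lemma rtranclp_map_gen:
  assumes "r\<^sup>*\<^sup>* u v" "\<And>x y. r x y \<Longrightarrow> s (f x) (f y)"
  shows "s\<^sup>*\<^sup>* (f u) (f v)"
  using assms(1)
proof (induction rule: rtranclp_induct)
  case base then show ?case by simp
next
  case (step y z) then show ?case using assms(2) by (meson rtranclp.rtrancl_into_rtrancl)
qed

lemma hconn_trivial:
  assumes "\<forall>X\<in>F. card X \<le> 1" "\<forall>X\<in>F. finite X" "hconn F u v"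
  shows "u = v"
proof -
  have "(\<lambda>x y. \<exists>X\<in>F. x \<in> X \<and> y \<in> X)\<^sup>*\<^sup>* u v" using assms(3) by (simp add: hconn_def)
  then show ?thesis
  proof (induction rule: rtranclp_induct)
    case base then show ?case by simp
  next
    case (step y z)
    then obtain X where X: "X \<in> F" "y \<in> X" "z \<in> X" by blast
    have "card X \<le> 1" "finite X" using X assms by auto
    then have "y = z" using X by (metis card_le_Suc0_iff_eq One_nat_def)
    then show ?case using step by simp
  qed
qed

lemma forest_bound:
  assumes "finite F" "\<forall>X\<in>F. finite X" "\<forall>u\<in>\<Union>F. \<forall>v\<in>\<Union>F. hconn F u v"
  shows "card (\<Union>F) \<le> 1 + (\<Sum>X\<in>F. card X - 1)"
  using assms
proof (induction "\<Sum>X\<in>F. card X - 1" arbitrary: F rule: less_induct)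
  case less
  show ?case
  proof (cases "\<forall>X\<in>F. card X \<le> 1")
    case True
    have "\<forall>u\<in>\<Union>F. \<forall>v\<in>\<Union>F. u = v"
      using hconn_trivial[OF True less.prems(2)] less.prems(3) by blast
    moreover have "finite (\<Union>F)" using less.prems(1,2) by auto
    ultimately have "card (\<Union>F) \<le> 1" by (metis card_le_Suc0_iff_eq One_nat_def)
    then show ?thesis by simp
  next
    case False
    then obtain X0 where X0: "X0 \<in> F" "card X0 > 1" by force
    have fX0: "finite X0" using X0 less.prems(2) by auto
    obtain a b where ab: "a \<in> X0" "b \<in> X0" "a \<noteq> b"
      using X0(2) fX0 by (metis One_nat_def card_le_Suc0_iff_eq not_le)
    define f where "f = (\<lambda>x. if x = b then a else x)"
    define F' where "F' = (\<lambda>X. f ` X) ` F"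
    have finF': "finite F'" using less.prems(1) by (simp add: F'_def)
    have finX': "\<forall>X\<in>F'. finite X" using less.prems(2) by (auto simp: F'_def)
    have U: "\<Union>F' = f ` \<Union>F" by (auto simp: F'_def)
    have aU: "a \<in> \<Union>F" "b \<in> \<Union>F" using ab X0 by auto
    have fU: "f ` \<Union>F = \<Union>F - {b}"
      using aU ab by (auto simp: f_def split: if_splits)
    have finU: "finite (\<Union>F)" using less.prems(1,2) by auto
    have cardU: "card (\<Union>F') + 1 = card (\<Union>F)"
      proof -
      have "card (\<Union>F - {b}) = card (\<Union>F) - 1" using aU(2) by (rule card_Diff_singleton)
      moreover have "card (\<Union>F) > 0" using finU aU by (auto simp: card_gt_0_iff)
      ultimately show ?thesis using U fU by simp
    qed
    have conn': "\<forall>u\<in>\<Union>F'. \<forall>v\<in>\<Union>F'. hconn F' u v"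
    proof (intro ballI)
      fix u v assume "u \<in> \<Union>F'" "v \<in> \<Union>F'"
      then obtain u0 v0 where uv: "u0 \<in> \<Union>F" "v0 \<in> \<Union>F" "u = f u0" "v = f v0"
        using U by auto
      have "hconn F u0 v0" using less.prems(3) uv by auto
      then show "hconn F' u v" unfolding hconn_def uv
        by (rule rtranclp_map_gen) (auto simp: F'_def)
    qed
    have le1: "(\<Sum>Y\<in>F'. card Y - 1) \<le> (\<Sum>X\<in>F. card (f ` X) - 1)"
      unfolding F'_def using sum_image_le[OF less.prems(1), of "\<lambda>Y. card Y - 1" "\<lambda>X. f ` X"]
      by (simp add: o_def)
    have le2: "(\<Sum>X\<in>F. card (f ` X) - 1) < (\<Sum>X\<in>F. card X - 1)"
    proof (rule sum_strict_mono_ex1[OF less.prems(1)])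
      show "\<forall>X\<in>F. card (f ` X) - 1 \<le> card X - 1"
        using less.prems(2) by (auto intro: diff_le_mono card_image_le)
      have "f a = f b" by (simp add: f_def)
      then have "\<not> inj_on f X0" using ab by (auto simp: inj_on_def)
      then have "card (f ` X0) < card X0" using fX0 card_image_le[OF fX0, of f]
        by (metis card_image le_neq_implies_less eq_card_imp_inj_on)
      moreover have "card (f ` X0) \<ge> 1" using fX0 ab
        by (metis One_nat_def Suc_leI card_gt_0_iff empty_iff finite_imageI image_is_empty)
      ultimately show "\<exists>X\<in>F. card (f ` X) - 1 < card X - 1" using X0 by force
    qed
    have IH: "card (\<Union>F') \<le> 1 + (\<Sum>Y\<in>F'. card Y - 1)"
      using less.hyps[OF _ finF' finX' conn'] le1 le2 by linarith
    show ?thesis using IH cardU le1 le2 by linarith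
  qed
qed

lemma isolated_lemma:
  assumes "induced_connected E X" "x \<in> X" "z \<in> X" "\<forall>y\<in>X. \<not> E x y"
  shows "z = x"
proof -
  have "(\<lambda>x y. x \<in> X \<and> y \<in> X \<and> E x y)\<^sup>*\<^sup>* x z" using assms(1-3)
    by (simp add: induced_connected_def)
  then show ?thesis
    by (rule converse_rtranclpE) (use assms(4) in auto)
qed

theorem mainTheorem8:
  fixes V :: "'a set" and E :: "'a \<Rightarrow> 'a \<Rightarrow> bool" and H :: "'a set set"
  assumes "simple_graph V E"
    and "card V \<ge> 2"
    and "connected_graph V E"
    and "co_connected V E"
    and "connecting_hypergraph V E H"
  shows "3 * hcost H \<ge> 2 * (int (card V) - 1)"
proof -
  have finV: "finite V" and sym: "\<And>x y. E x y \<Longrightarrow> E y x" and irr: "\<And>x. \<not> E x x"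
    using assms(1) by (auto simp: simple_graph_def)
  have Hsub: "\<And>X. X \<in> H \<Longrightarrow> X \<subseteq> V \<and> card X \<ge> 2 \<and> induced_connected E X"
    and cover: "\<And>u v. u \<in> V \<Longrightarrow> v \<in> V \<Longrightarrow> u \<noteq> v \<Longrightarrow> \<not> E u v \<Longrightarrow> \<exists>X\<in>H. u \<in> X \<and> v \<in> X"
    using assms(5) by (auto simp: connecting_hypergraph_def)
  have finH: "finite H" using Hsub finV
    by (metis Pow_iff finite_Pow_iff rev_finite_subset subsetI)
  define g where "g X = (if card X \<ge> 4 then X else {x\<in>X. \<exists>y\<in>X. y \<noteq> x \<and> \<not> E x y})" for X
  define F where "F = g ` H"
  have gsub: "g X \<subseteq> X" for X by (auto simp: g_def)
  have finF: "finite F" using finH by (simp add: F_def)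
  have finX: "\<forall>X\<in>F. finite X"
  proof
    fix Y assume "Y \<in> F"
    then obtain X where "X \<in> H" "Y = g X" by (auto simp: F_def)
    then show "finite Y" using Hsub gsub finV by (meson finite_subset)
  qed
  have UV: "\<Union>F \<subseteq> V" using Hsub gsub by (fastforce simp: F_def)
  have step: "hconn F u v" if "compl_adj V E u v" for u v
  proof -
    from that have "u \<in> V" "v \<in> V" "u \<noteq> v" "\<not> E u v" by (auto simp: compl_adj_def)
    then obtain X where X: "X \<in> H" "u \<in> X" "v \<in> X" using cover by blast
    have "\<not> E v u" using \<open>\<not> E u v\<close> sym by blast
    have "u \<in> {x\<in>X. \<exists>y\<in>X. y \<noteq> x \<and> \<not> E x y}"
      using X \<open>u \<noteq> v\<close> \<open>\<not> E u v\<close> by (intro CollectI conjI bexI[of _ v]) auto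
    then have "u \<in> g X" using X(2) by (cases "4 \<le> card X") (simp_all only: g_def if_True if_False)
    moreover have "v \<in> {x\<in>X. \<exists>y\<in>X. y \<noteq> x \<and> \<not> E x y}"
      using X \<open>u \<noteq> v\<close> \<open>\<not> E v u\<close> by (intro CollectI conjI bexI[of _ u]) auto
    then have "v \<in> g X" using X(3) by (cases "4 \<le> card X") (simp_all only: g_def if_True if_False)
    ultimately have "u \<in> g X" "v \<in> g X" by auto
    then show ?thesis using X unfolding hconn_def F_def by (intro r_into_rtranclp) auto
  qed
  have cc: "V \<noteq> {}" "\<And>u v. u \<in> V \<Longrightarrow> v \<in> V \<Longrightarrow>
      (\<lambda>x y. x \<in> V \<and> y \<in> V \<and> compl_adj V E x y)\<^sup>*\<^sup>* u v"
    using assms(4) by (auto simp: co_connected_def connected_graph_def induced_connected_def)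
  have conn: "hconn F u v" if "u \<in> V" "v \<in> V" for u v
  proof -
    have "(\<lambda>x y. x \<in> V \<and> y \<in> V \<and> compl_adj V E x y)\<^sup>*\<^sup>* u v" using cc that by auto
    then show ?thesis
    proof (induction rule: rtranclp_induct)
      case base then show ?case by (simp add: hconn_def)
    next
      case (step y z)
      then show ?case using step(2) \<open>\<And>u v. compl_adj V E u v \<Longrightarrow> hconn F u v\<close>
        unfolding hconn_def by (meson rtranclp_trans)
    qed
  qed
  have VU: "V \<subseteq> \<Union>F"
  proof
    fix v assume v: "v \<in> V"
    obtain w where w: "w \<in> V" "w \<noteq> v"
    proof -
      have "\<not> V \<subseteq> {v}" using assms(2) finV
        using card_mono[of "{v}" V] by auto
      then show ?thesis using that by auto
    qed
    have "(\<lambda>x y. x \<in> V \<and> y \<in> V \<and> compl_adj V E x y)\<^sup>*\<^sup>* v w" using cc v w by auto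
    then obtain x where "compl_adj V E v x"
      by (rule converse_rtranclpE) (use w in auto)
    then have "v \<noteq> x" "x \<in> V" "\<not> E v x" by (auto simp: compl_adj_def)
    then obtain X where X: "X \<in> H" "v \<in> X" "x \<in> X" using cover v by blast
    then have "v \<in> g X" using \<open>v \<noteq> x\<close> \<open>\<not> E v x\<close> by (auto simp: g_def)
    then show "v \<in> \<Union>F" using X by (auto simp: F_def)
  qed
  have UVeq: "\<Union>F = V" using UV VU by auto
  have key: "card V \<le> 1 + (\<Sum>Y\<in>F. card Y - 1)"
    using forest_bound[OF finF finX] conn UVeq by auto
  have s1: "(\<Sum>Y\<in>F. card Y - 1) \<le> (\<Sum>X\<in>H. card (g X) - 1)"
    unfolding F_def using sum_image_le[OF finH, of "\<lambda>Y. card Y - 1" g] by (simp add: o_def)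
  have per: "2 * int (card (g X) - 1) \<le> 3 * (int (card X) - 2)" if X: "X \<in> H" for X
  proof (cases "card X \<ge> 4")
    case True then show ?thesis by (simp add: g_def)
  next
    case False
    have c2: "card X \<ge> 2" "induced_connected E X" "finite X"
      using Hsub[OF X] finV by (auto intro: rev_finite_subset)
    have ne: "g X \<noteq> X"
    proof
      assume eq: "g X = X"
      then have all: "\<forall>x\<in>X. \<exists>y\<in>X. y \<noteq> x \<and> \<not> E x y" using False
        by (auto simp: g_def)
      have "card X = 2 \<or> card X = 3" using False c2 by linarith
      then show False
      proof
        assume "card X = 2"
        then obtain a b where ab: "X = {a,b}" "a \<noteq> b" by (auto simp: card_2_iff)
        have "\<not> E a b" using all ab by auto
        then have "b = a" using isolated_lemma[OF c2(2), of a b] ab irr by auto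
        then show False using ab by simp
      next
        assume "card X = 3"
        then obtain a b c where abc: "X = {a,b,c}" "a \<noteq> b" "b \<noteq> c" "a \<noteq> c"
          by (auto simp: card_3_iff)
        have "\<exists>x\<in>X. \<forall>y\<in>X. \<not> E x y"
          using all abc sym irr by auto
        then obtain x where x: "x \<in> X" "\<forall>y\<in>X. \<not> E x y" by blast
        have "\<forall>z\<in>X. z = x" using isolated_lemma[OF c2(2) x(1) _ x(2)] by auto
        then show False using abc by auto
      qed
    qed
    then have "card (g X) < card X" using gsub c2(3) by (meson psubsetI psubset_card_mono)
    then show ?thesis using False c2(1) by (simp add: of_nat_diff)
  qed
  have "2 * int (\<Sum>X\<in>H. card (g X) - 1) = (\<Sum>X\<in>H. 2 * int (card (g X) - 1))"
    by (simp add: of_nat_sum sum_distrib_left)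
  also have "\<dots> \<le> (\<Sum>X\<in>H. 3 * (int (card X) - 2))" using per by (rule sum_mono)
  also have "\<dots> = 3 * hcost H" by (simp add: hcost_def sum_distrib_left)
  finally have fin: "2 * int (\<Sum>X\<in>H. card (g X) - 1) \<le> 3 * hcost H" .
  have "card V \<le> 1 + (\<Sum>X\<in>H. card (g X) - 1)" using key s1 by linarith
  then have "int (card V) \<le> int (1 + (\<Sum>X\<in>H. card (g X) - 1))" by (rule of_nat_mono)
  then have "int (card V) \<le> 1 + int (\<Sum>X\<in>H. card (g X) - 1)" by simp
  moreover have "\<And>a b c :: int. a \<le> 1 + b \<Longrightarrow> 2 * b \<le> c \<Longrightarrow> 2 * (a - 1) \<le> c" by simp
  ultimately show ?thesis using fin by blast
qed

end
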